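(* Let $n>(p+s)^4$ be an integer. For any $i \in \{1,2,\ldots,p-1+s\}$ and any $k \in \{1,2,\ldots,n\}$, we have $d_n^{p-1+s-i} r_{i,k} \in \mathbb{Z}$.
   Context: Let $p\geqslant 5$ be a prime and $s$ a positive integer. Write $v_p$ for the $p$-adic valuation, $(\alpha)_k=\alpha(\alpha+1)\cdots(\alpha+k-1)$, and $d_n=\operatorname{LCM}\{1,2,\ldots,n\}$. Put $N_0=v_p(p-1+s)$ and $M_0=p^{2+N_0}s-1$. For an integer $n>(p+s)^4$ let \[R_n(t)=p^{pn}\, n!^s\, t^{M_0}\,\frac{\prod_{j=1}^{p-1}(t+\frac{j}{p})_n}{(t)_{n+1}^{p-1+s}}\in\mathbb{Q}(t),\] with partial fraction decomposition $R_n(t)=\sum_{i=1}^{p-1+s}\sum_{k=1}^{n} r_{i,k}(t+k)^{-i}$, $r_{i,k}\in\mathbb{Q}$. *)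

theory Defs
  imports "HOL-Computational_Algebra.Computational_Algebra"
begin

definition N0 :: "nat \<Rightarrow> nat \<Rightarrow> nat" where
  "N0 p s = multiplicity p (p - 1 + s)"

definition M0 :: "nat \<Rightarrow> nat \<Rightarrow> nat" where
  "M0 p s = p ^ (2 + N0 p s) * s - 1"

definition dlcm :: "nat \<Rightarrow> nat" where
  "dlcm n = Lcm {1..n}"

definition Rn :: "nat \<Rightarrow> nat \<Rightarrow> nat \<Rightarrow> rat \<Rightarrow> rat" where
  "Rn p s n t = (of_nat p) ^ (p * n) * (fact n) ^ s * t ^ (M0 p s)
      * (\<Prod>j = 1..p - 1. pochhammer (t + of_nat j / of_nat p) n)
      / (pochhammer t (n + 1)) ^ (p - 1 + s)"

end

theory Submission
  imports Defs
begin


definition good :: "nat \<Rightarrow> rat fps \<Rightarrow> bool" where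
  "good n f \<longleftrightarrow> (\<forall>m. (of_nat (dlcm n) :: rat) ^ m * f $ m \<in> \<int>)"

lemma good_mult: assumes "good n f" "good n g" shows "good n (f * g)"
  unfolding good_def
proof
  fix m
  have "(of_nat (dlcm n) :: rat) ^ m * (f * g) $ m
      = (\<Sum>i=0..m. ((of_nat (dlcm n)) ^ i * f $ i) * ((of_nat (dlcm n)) ^ (m - i) * g $ (m - i)))"
    unfolding fps_mult_nth sum_distrib_left
    by (intro sum.cong refl) (auto simp: power_add[symmetric] algebra_simps)
  also have "\<dots> \<in> \<int>"
  proof -
    have hf: "\<And>i. (of_nat (dlcm n) :: rat) ^ i * f $ i \<in> \<int>" using assms(1) unfolding good_def by blast
    have hg: "\<And>i. (of_nat (dlcm n) :: rat) ^ i * g $ i \<in> \<int>" using assms(2) unfolding good_def by blast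
    show ?thesis by (rule Ints_sum) (rule Ints_mult[OF hf hg])
  qed
  finally show "(of_nat (dlcm n) :: rat) ^ m * (f * g) $ m \<in> \<int>" .
qed

lemma good_add: assumes "good n f" "good n g" shows "good n (f + g)"
  using assms unfolding good_def by (auto simp: distrib_left intro: Ints_add)

lemma good_intcoeff: assumes "\<And>m. f $ m \<in> \<int>" shows "good n f"
  using assms unfolding good_def by (auto intro: Ints_mult Ints_power)

lemma good_one: "good n 1"
  by (rule good_intcoeff) (auto simp: fps_one_nth)

lemma good_const: "c \<in> \<int> \<Longrightarrow> good n (fps_const c)"
  by (rule good_intcoeff) auto

lemma good_sum: "(\<And>x. x \<in> A \<Longrightarrow> good n (f x)) \<Longrightarrow> good n (\<Sum>x\<in>A. f x)"
proof (induction A rule: infinite_finite_induct)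
  case (infinite A) then show ?case by (simp add: good_intcoeff)
next
  case empty then show ?case by (simp add: good_intcoeff)
next
  case (insert x F) then show ?case by (auto intro: good_add)
qed

lemma good_prod: "(\<And>x. x \<in> A \<Longrightarrow> good n (f x)) \<Longrightarrow> good n (\<Prod>x\<in>A. f x)"
proof (induction A rule: infinite_finite_induct)
  case (infinite A) then show ?case by (simp add: good_one)
next
  case empty then show ?case by (simp add: good_one)
next
  case (insert x F) then show ?case by (auto intro: good_mult)
qed

lemma good_power: "good n f \<Longrightarrow> good n (f ^ m)"
  by (induction m) (auto intro: good_mult good_one)

lemma dvd_dlcm: assumes "1 \<le> c" "c \<le> n" shows "c dvd dlcm n"
  unfolding dlcm_def using assms by (intro dvd_Lcm) auto

lemma good_X_inv:
  fixes c :: int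
  assumes "c \<noteq> 0" "\<bar>c\<bar> \<le> int n"
  shows "good n (fps_X * inverse (fps_const (of_int c) + fps_X))"
proof -
  define g :: "rat fps" where "g = Abs_fps (\<lambda>m. (-1) ^ m / of_int c ^ (m + 1))"
  have cz: "(of_int c :: rat) \<noteq> 0" using assms by simp
  have "(fps_const (of_int c) + fps_X) * g = 1"
  proof (rule fps_ext)
    fix m
    show "((fps_const (of_int c) + fps_X) * g) $ m = (1 :: rat fps) $ m"
    proof (cases m)
      case 0 then show ?thesis using cz by (simp add: g_def distrib_right)
    next
      case (Suc m')
      then show ?thesis using cz by (simp add: g_def distrib_right field_simps)
    qed
  qed
  then have inv: "inverse (fps_const (of_int c) + fps_X) = g" by (rule fps_inverse_unique)
  have "nat \<bar>c\<bar> dvd dlcm n" using assms by (intro dvd_dlcm) auto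
  then obtain q where q: "dlcm n = nat \<bar>c\<bar> * q" by (rule dvdE)
  have dc: "(of_nat (dlcm n) :: rat) / of_int c \<in> \<int>"
  proof -
    have "(of_nat (dlcm n) :: rat) = of_int \<bar>c\<bar> * of_nat q" using q by simp
    then have "(of_nat (dlcm n) :: rat) / of_int c = of_int (sgn c) * of_nat q"
      using cz by (cases "c > 0") (auto simp: field_simps)
    then show ?thesis by simp
  qed
  show ?thesis unfolding good_def inv
  proof
    fix m
    show "(of_nat (dlcm n) :: rat) ^ m * (fps_X * g) $ m \<in> \<int>"
    proof (cases m)
      case 0 then show ?thesis by simp
    next
      case (Suc m')
      have "(of_nat (dlcm n) :: rat) ^ m * (fps_X * g) $ m = (-1) ^ m' * ((of_nat (dlcm n)) / of_int c) ^ m"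
        using Suc cz by (simp add: g_def power_divide)
      also have "\<dots> \<in> \<int>" using dc by (intro Ints_mult Ints_power) auto
      finally show ?thesis .
    qed
  qed
qed



lemma mult_fact_rec:
  fixes p :: nat assumes p: "prime p"
  shows "multiplicity p (fact n :: nat) = n div p + multiplicity p (fact (n div p) :: nat)"
proof -
  have p0: "p > 0" using p prime_gt_0_nat by blast
  have "(fact n :: nat) = \<Prod>{1..n}" by (simp add: fact_prod)
  also have "\<dots> = \<Prod>({1..n} \<inter> {i. p dvd i}) * \<Prod>({1..n} - {i. p dvd i})"
    by (rule prod.Int_Diff) simp
  also have "{1..n} \<inter> {i. p dvd i} = (\<lambda>q. p * q) ` {1..n div p}"
  proof (intro equalityI subsetI)
    fix x assume "x \<in> {1..n} \<inter> {i. p dvd i}"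
    then obtain q where "x = p * q" "1 \<le> x" "x \<le> n" by (auto elim: dvdE)
    moreover have "q \<le> n div p" using \<open>x = p * q\<close> \<open>x \<le> n\<close> p0
      by (metis div_le_mono nonzero_mult_div_cancel_left not_gr0)
    ultimately show "x \<in> (\<lambda>q. p * q) ` {1..n div p}" by (auto intro!: imageI)
  next
    fix x assume "x \<in> (\<lambda>q. p * q) ` {1..n div p}"
    then obtain q where "q \<in> {1..n div p}" "x = p * q" by (rule imageE)
    then have "x = p * q" "1 \<le> q" "q \<le> n div p" by auto
    moreover have "p * (n div p) \<le> n" by simp
    ultimately show "x \<in> {1..n} \<inter> {i. p dvd i}" using p0
      by (auto intro: order.trans[OF mult_le_mono2])
  qed
  also have "\<Prod>((\<lambda>q. p * q) ` {1..n div p}) = (\<Prod>q\<in>{1..n div p}. p * q)"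
    using p0 by (subst prod.reindex) (auto simp: inj_on_def)
  also have "\<dots> = p ^ (n div p) * fact (n div p)"
    by (simp add: prod.distrib fact_prod)
  finally have eq: "(fact n :: nat) = p ^ (n div p) * fact (n div p) * \<Prod>({1..n} - {i. p dvd i})" .
  have nd: "\<not> p dvd \<Prod>({1..n} - {i. p dvd i})"
    using p by (subst prime_dvd_prod_iff) auto
  have nz: "\<Prod>({1..n} - {i. p dvd i}) \<noteq> 0" by (auto simp: prod_zero_iff)
  have "multiplicity p (fact n :: nat) = multiplicity p (p ^ (n div p) * fact (n div p)) + multiplicity p (\<Prod>({1..n} - {i. p dvd i}))"
    unfolding eq using p nz by (intro prime_elem_multiplicity_mult_distrib) auto
  also have "multiplicity p (\<Prod>({1..n} - {i. p dvd i})) = 0"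
    using nd by (rule not_dvd_imp_multiplicity_0)
  also have "multiplicity p (p ^ (n div p) * fact (n div p)) = n div p + multiplicity p (fact (n div p) :: nat)"
    using p p0 by (subst prime_elem_multiplicity_mult_distrib) auto
  finally show ?thesis by simp
qed

lemma legendre_bound:
  fixes p :: nat assumes p: "prime p"
  shows "(p - 1) * multiplicity p (fact n :: nat) \<le> n"
proof (induction n rule: less_induct)
  case (less n)
  have p1: "p > 1" using p prime_gt_1_nat by blast
  show ?case
  proof (cases "n div p = 0")
    case True
    then have "multiplicity p (fact n :: nat) = 0" using mult_fact_rec[OF p, of n] by simp
    then show ?thesis by simp
  next
    case False
    then have "n > 0" by (cases n) auto
    then have lt: "n div p < n" using p1 by (simp add: div_less_dividend)
    have "(p - 1) * multiplicity p (fact n :: nat) = (p - 1) * (n div p) + (p - 1) * multiplicity p (fact (n div p) :: nat)"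
      using mult_fact_rec[OF p, of n] by (simp add: algebra_simps)
    also have "\<dots> \<le> (p - 1) * (n div p) + n div p" using less[OF lt] by simp
    also have "\<dots> = p * (n div p)" using p1 by (simp add: algebra_simps)
    also have "\<dots> \<le> n" by simp
    finally show ?thesis .
  qed
qed



lemma int_ivl_image: "(\<lambda>b. a + int b) ` {0..<L} = {a..<a + int L}"
proof (intro equalityI subsetI)
  fix m assume "m \<in> {a..<a + int L}"
  then have "m = a + int (nat (m - a))" "nat (m - a) \<in> {0..<L}" by auto
  then show "m \<in> (\<lambda>b. a + int b) ` {0..<L}" by blast
qed auto

lemma prod_int_ivl: "(\<Prod>m\<in>{a..<a + int L}. f m) = (\<Prod>b\<in>{0..<L}. f (a + int b))"
  by (subst int_ivl_image[symmetric], subst prod.reindex) (auto simp: inj_on_def)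

lemma ap_dvd:
  fixes p :: nat and x a :: int
  assumes p: "prime p"
  shows "(fact L :: int) dvd (int p) ^ multiplicity p (fact L :: nat) * (\<Prod>m\<in>{a..<a + int L}. x + int p * m)"
proof -
  obtain c :: nat where c: "(fact L :: nat) = p ^ multiplicity p (fact L :: nat) * c" "\<not> p dvd c"
  proof -
    have "(fact L :: nat) \<noteq> 0" by simp
    moreover have "\<not> is_unit p" using prime_gt_1_nat[OF p] by simp
    ultimately show ?thesis using that multiplicity_decompose'[of "fact L :: nat" p] by blast
  qed
  have "coprime p c" using p c(2) by (simp add: prime_imp_coprime)
  then have "coprime (int p) (int c)" by simp
  then have "gcd (int p) (int c) = 1" by simp
  then obtain u v where uv: "u * int p + v * int c = 1" using bezout_int[of "int p" "int c"] by auto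
  have modeq: "(x + int p * m) mod int c = (int p * (u * x + m)) mod int c" for m
  proof -
    have up: "u * int p = 1 - v * int c" using uv by linarith
    have "int p * (u * x + m) = (u * int p) * x + int p * m" by (simp add: algebra_simps)
    also have "\<dots> = (x + int p * m) + (- v * x) * int c" unfolding up by (simp add: algebra_simps)
    finally have e: "int p * (u * x + m) = (x + int p * m) + (- v * x) * int c" .
    show ?thesis unfolding e by (rule mod_mult_self1[symmetric])
  qed
  have "(\<Prod>m\<in>{a..<a + int L}. x + int p * m) mod int c = (\<Prod>m\<in>{a..<a + int L}. (x + int p * m) mod int c) mod int c"
    by (simp add: mod_prod_eq)
  also have "\<dots> = (\<Prod>m\<in>{a..<a + int L}. (int p * (u * x + m)) mod int c) mod int c"
    by (simp add: modeq)
  also have "\<dots> = (\<Prod>m\<in>{a..<a + int L}. int p * (u * x + m)) mod int c"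
    by (simp add: mod_prod_eq)
  also have "(\<Prod>m\<in>{a..<a + int L}. int p * (u * x + m)) = int p ^ L * pochhammer (u * x + a) L"
    by (simp add: prod_int_ivl prod.distrib pochhammer_prod ac_simps)
  also have "\<dots> mod int c = 0"
  proof -
    have "int c dvd fact L" using c(1) by (metis dvd_triv_right of_nat_dvd_iff of_nat_fact)
    also have "fact L dvd pochhammer (u * x + a) L" by (rule fact_dvd_pochhammer)
    finally show ?thesis by simp
  qed
  finally have "int c dvd (\<Prod>m\<in>{a..<a + int L}. x + int p * m)" by (simp add: dvd_eq_mod_eq_0)
  moreover have "(fact L :: int) = int p ^ multiplicity p (fact L :: nat) * int c"
    using arg_cong[OF c(1), of int] by simp
  ultimately show ?thesis by simp
qed



lemma lagrange:
  fixes Q :: "rat poly" and e :: "nat \<Rightarrow> rat" and I :: "nat set"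
  assumes fin: "finite I" and inj: "inj_on e I" and deg: "degree Q < card I"
  shows "Q = (\<Sum>l\<in>I. smult (poly Q (e l) / (\<Prod>l'\<in>I-{l}. e l - e l')) (\<Prod>l'\<in>I-{l}. [:- e l', 1:]))"
    (is "Q = ?R")
proof (rule poly_eqI_degree[where A = "e ` I"])
  have cI: "card (e ` I) = card I" using inj by (rule card_image)
  show "degree Q < card (e ` I)" using deg cI by simp
  have "degree ?R \<le> card I - 1"
  proof (rule degree_sum_le[OF fin])
    fix l assume l: "l \<in> I"
    have "degree (\<Prod>l'\<in>I-{l}. [:- e l', 1:]) \<le> (\<Sum>l'\<in>I-{l}. degree [:- e l', 1:])"
      using degree_prod_sum_le[of "I-{l}" "\<lambda>l'. [:- e l', 1:]"] fin by (simp add: o_def)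
    also have "\<dots> = card I - 1" using fin l by simp
    finally show "degree (smult (poly Q (e l) / (\<Prod>l'\<in>I-{l}. e l - e l')) (\<Prod>l'\<in>I-{l}. [:- e l', 1:])) \<le> card I - 1"
      using degree_smult_le order.trans by blast
  qed
  then show "degree ?R < card (e ` I)" using deg cI by linarith
  fix y assume "y \<in> e ` I"
  then obtain z where z: "z \<in> I" "y = e z" by blast
  have "poly ?R (e z) = (\<Sum>l\<in>I. poly Q (e l) / (\<Prod>l'\<in>I-{l}. e l - e l') * (\<Prod>l'\<in>I-{l}. e z - e l'))"
    by (simp add: poly_sum poly_prod)
  also have "\<dots> = poly Q (e z) / (\<Prod>l'\<in>I-{z}. e z - e l') * (\<Prod>l'\<in>I-{z}. e z - e l')"
  proof (rule sum.mono_neutral_right[of I "{z}", simplified])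
    show "finite I" by fact
    show "z \<in> I" by fact
    show "\<forall>l\<in>I - {z}. poly Q (e l) / (\<Prod>l'\<in>I - {l}. e l - e l') * (\<Prod>l'\<in>I - {l}. e z - e l') = 0"
    proof
      fix l assume "l \<in> I - {z}"
      then have "z \<in> I - {l}" using z by auto
      then have "(\<Prod>l'\<in>I - {l}. e z - e l') = 0" using fin by (intro prod_zero) auto
      then show "poly Q (e l) / (\<Prod>l'\<in>I - {l}. e l - e l') * (\<Prod>l'\<in>I - {l}. e z - e l') = 0" by simp
    qed
  qed
  also have "\<dots> = poly Q (e z)"
  proof -
    have "(\<Prod>l'\<in>I-{z}. e z - e l') \<noteq> 0"
      using fin inj z(1) by (auto simp: prod_zero_iff inj_on_def)
    then show ?thesis by simp
  qed
  finally show "poly Q y = poly ?R y" using z by simp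
qed



definition Pk :: "nat \<Rightarrow> nat \<Rightarrow> rat poly" where
  "Pk n k = (\<Prod>l\<in>{0..n}-{k}. [:of_int (int l - int k), 1:])"

definition Hk :: "nat \<Rightarrow> nat \<Rightarrow> rat fps" where
  "Hk k l = (if l = k then 1 else fps_X * inverse (fps_const (of_int (int l - int k)) + fps_X))"

lemma fps_lin: "fps_of_poly [:c, 1:] = fps_const c + (fps_X :: rat fps)"
  by (simp add: fps_of_poly_pCons fps_of_poly_const)

lemma prod_lin_0_nz:
  assumes "finite A" "k \<notin> A"
  shows "fps_of_poly (\<Prod>l\<in>A. [:of_int (int l - int k), 1:] :: rat poly) $ 0 \<noteq> 0"
proof -
  have "fps_of_poly (\<Prod>l\<in>A. [:of_int (int l - int k), 1:] :: rat poly) $ 0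
      = poly (\<Prod>l\<in>A. [:of_int (int l - int k), 1:] :: rat poly) 0"
    by (simp add: poly_0_coeff_0)
  also have "\<dots> = (\<Prod>l\<in>A. of_int (int l - int k))" by (simp add: poly_prod)
  also have "\<dots> \<noteq> 0" using assms by (auto simp: prod_zero_iff)
  finally show ?thesis .
qed

lemma fps_decomp:
  fixes Q :: "rat poly"
  assumes deg: "degree Q \<le> n" and k: "k \<le> n"
  shows "fps_of_poly Q * inverse (fps_of_poly (Pk n k)) =
     (\<Sum>l\<in>{0..n}. fps_const (poly Q (of_int (int k - int l)) /
         (\<Prod>l'\<in>{0..n}-{l}. of_int (int k - int l) - of_int (int k - int l'))) * Hk k l)"
proof -
  define e :: "nat \<Rightarrow> rat" where "e l = of_int (int k - int l)" for l
  have inj: "inj_on e {0..n}" by (auto simp: inj_on_def e_def)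
  have lin: "[:- e l', 1:] = [:of_int (int l' - int k), 1:]" for l' by (simp add: e_def)
  have L: "Q = (\<Sum>l\<in>{0..n}. smult (poly Q (e l) / (\<Prod>l'\<in>{0..n}-{l}. e l - e l')) (\<Prod>l'\<in>{0..n}-{l}. [:- e l', 1:]))"
    using deg by (intro lagrange inj) auto
  have B0: "fps_of_poly (Pk n k) $ 0 \<noteq> 0" unfolding Pk_def by (rule prod_lin_0_nz) auto
  have key: "fps_of_poly (\<Prod>l'\<in>{0..n}-{l}. [:- e l', 1:]) * inverse (fps_of_poly (Pk n k)) = Hk k l"
    if l: "l \<in> {0..n}" for l
  proof (cases "l = k")
    case True
    then show ?thesis using B0 by (simp add: lin Hk_def Pk_def inverse_mult_eq_1')
  next
    case False
    define B where "B = (\<Prod>l'\<in>{0..n}-{l,k}. [:of_int (int l' - int k), 1:] :: rat poly)"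
    have B0': "fps_of_poly B $ 0 \<noteq> 0" unfolding B_def by (rule prod_lin_0_nz) auto
    have e1: "{0..n}-{l} = insert k ({0..n}-{l,k})" using k False by auto
    have e2: "{0..n}-{k} = insert l ({0..n}-{l,k})" using l False by auto
    have P1: "(\<Prod>l'\<in>{0..n}-{l}. [:- e l', 1:]) = [:0, 1:] * B"
      unfolding e1 B_def lin by (subst prod.insert) auto
    have P2: "Pk n k = [:of_int (int l - int k), 1:] * B"
      unfolding Pk_def e2 B_def by (subst prod.insert) auto
    have "fps_of_poly (\<Prod>l'\<in>{0..n}-{l}. [:- e l', 1:]) * inverse (fps_of_poly (Pk n k))
        = fps_X * inverse (fps_const (of_int (int l - int k)) + fps_X) * (fps_of_poly B * inverse (fps_of_poly B))"
      unfolding P1 P2 fps_of_poly_mult fps_inverse_mult fps_lin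
      by (simp add: fps_of_poly_pCons ac_simps)
    also have "\<dots> = Hk k l" using B0' False by (simp add: inverse_mult_eq_1' Hk_def)
    finally show ?thesis .
  qed
  have "fps_of_poly Q * inverse (fps_of_poly (Pk n k)) =
     (\<Sum>l\<in>{0..n}. fps_const (poly Q (e l) / (\<Prod>l'\<in>{0..n}-{l}. e l - e l')) *
        (fps_of_poly (\<Prod>l'\<in>{0..n}-{l}. [:- e l', 1:]) * inverse (fps_of_poly (Pk n k))))"
    by (subst L) (simp add: fps_of_poly_sum fps_of_poly_smult sum_distrib_right sum_distrib_left ac_simps)
  also have "\<dots> = (\<Sum>l\<in>{0..n}. fps_const (poly Q (e l) / (\<Prod>l'\<in>{0..n}-{l}. e l - e l')) * Hk k l)"
    by (intro sum.cong refl) (simp add: key)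
  finally show ?thesis by (simp add: e_def)
qed

lemma good_Hk: assumes "k \<le> n" "l \<le> n" shows "good n (Hk k l)"
proof (cases "l = k")
  case True then show ?thesis by (simp add: Hk_def good_one)
next
  case False
  have "good n (fps_X * inverse (fps_const (of_int (int l - int k)) + fps_X))"
    by (rule good_X_inv) (use assms False in auto)
  then show ?thesis unfolding Hk_def using False by simp
qed

lemma good_decomp:
  fixes Q :: "rat poly"
  assumes deg: "degree Q \<le> n" and k: "k \<le> n"
    and ints: "\<And>l. l \<le> n \<Longrightarrow> C * (poly Q (of_int (int k - int l)) /
         (\<Prod>l'\<in>{0..n}-{l}. of_int (int k - int l) - of_int (int k - int l'))) \<in> \<int>"
  shows "good n (fps_const C * (fps_of_poly Q * inverse (fps_of_poly (Pk n k))))"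
  unfolding fps_decomp[OF deg k] sum_distrib_left
proof (rule good_sum)
  fix l assume l: "l \<in> {0..n}"
  let ?c = "poly Q (of_int (int k - int l)) /
         (\<Prod>l'\<in>{0..n}-{l}. of_int (int k - int l) - of_int (int k - int l') :: rat)"
  have "good n (fps_const (C * ?c) * Hk k l)"
    using l k by (intro good_mult good_const ints good_Hk) auto
  then show "good n (fps_const C * (fps_const ?c * Hk k l))"
    by (simp only: mult.assoc[symmetric] fps_const_mult)
qed



lemma W_int:
  assumes "l \<le> n"
  shows "(\<Prod>l'\<in>{0..n}-{l}. int l' - int l) = (-1) ^ l * fact l * fact (n - l)"
proof -
  have split: "{0..n}-{l} = {0..<l} \<union> {Suc l..n}" using assms by auto
  have "(\<Prod>l'\<in>{0..n}-{l}. int l' - int l) = (\<Prod>l'\<in>{0..<l}. int l' - int l) * (\<Prod>l'\<in>{Suc l..n}. int l' - int l)"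
    unfolding split by (rule prod.union_disjoint) auto
  also have "(\<Prod>l'\<in>{0..<l}. int l' - int l) = (\<Prod>l'\<in>{0..<l}. (-1) * int (l - l'))"
    by (intro prod.cong refl) auto
  also have "\<dots> = (-1) ^ l * (\<Prod>l'\<in>{0..<l}. int (l - l'))"
    by (simp only: prod.distrib prod_constant card_atLeastLessThan diff_zero)
  also have "(\<Prod>l'\<in>{0..<l}. int (l - l')) = fact l"
    by (simp only: fact_prod_rev[where 'a=int, of l] of_nat_prod)
  also have "(\<Prod>l'\<in>{Suc l..n}. int l' - int l) = (\<Prod>i\<in>{1..n-l}. int i)"
  proof -
    have "{Suc l..n} = {1 + l..(n - l) + l}" using assms by auto
    then have "(\<Prod>l'\<in>{Suc l..n}. int l' - int l) = (\<Prod>i\<in>{1..n-l}. int (i + l) - int l)"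
      by (simp only: prod.shift_bounds_cl_nat_ivl)
    then show ?thesis by simp
  qed
  also have "\<dots> = fact (n - l)" by (simp add: fact_prod)
  finally show ?thesis by simp
qed

lemma W_rat:
  assumes "l \<le> n"
  shows "(\<Prod>l'\<in>{0..n}-{l}. of_int (int k - int l) - of_int (int k - int l') :: rat)
     = of_int ((-1) ^ l * fact l * fact (n - l))"
proof -
  have "(\<Prod>l'\<in>{0..n}-{l}. of_int (int k - int l) - of_int (int k - int l') :: rat)
      = of_int (\<Prod>l'\<in>{0..n}-{l}. int l' - int l)" by (simp add: of_int_prod)
  then show ?thesis using W_int[OF assms] by simp
qed

lemma c0_int:
  assumes "l \<le> n"
  shows "fact n * (poly 1 (of_int (int k - int l)) /
     (\<Prod>l'\<in>{0..n}-{l}. of_int (int k - int l) - of_int (int k - int l') :: rat)) \<in> \<int>"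
proof -
  have "fact n * (poly 1 (of_int (int k - int l)) /
     (\<Prod>l'\<in>{0..n}-{l}. of_int (int k - int l) - of_int (int k - int l') :: rat))
     = (-1) ^ l * (fact n / (fact l * fact (n - l)))"
    unfolding W_rat[OF assms] by (simp add: field_simps)
  also have "\<dots> = (-1) ^ l * of_nat (n choose l)" by (simp add: binomial_fact assms)
  also have "\<dots> \<in> \<int>" by simp
  finally show ?thesis .
qed

definition Qj :: "nat \<Rightarrow> nat \<Rightarrow> nat \<Rightarrow> nat \<Rightarrow> rat poly" where
  "Qj p n k j = (\<Prod>m\<in>{0..<n}. [:of_int (int j + int p * (int m - int k)), of_nat p:])"

lemma degree_Qj: "degree (Qj p n k j) \<le> n"
proof -
  define f where "f m = ([:of_int (int j + int p * (int m - int k)), of_nat p:] :: rat poly)" for m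
  have "Qj p n k j = prod f {0..<n}" by (simp add: Qj_def f_def)
  then have "degree (Qj p n k j) \<le> sum (degree \<circ> f) {0..<n}"
    by (simp only: degree_prod_sum_le finite_atLeastLessThan)
  also have "\<dots> \<le> (\<Sum>m\<in>{0..<n}. 1)"
  proof (rule sum_mono)
    fix m show "(degree \<circ> f) m \<le> 1"
      unfolding f_def o_def by (rule order.trans[OF degree_pCons_le]) simp
  qed
  finally show ?thesis by simp
qed

lemma poly_Qj_node:
  "poly (Qj p n k j) (of_int (int k - int l)) = of_int (\<Prod>m\<in>{- int l..<- int l + int n}. int j + int p * m)"
proof -
  have "poly (Qj p n k j) (of_int (int k - int l)) = (\<Prod>m\<in>{0..<n}. of_int (int j + int p * (int m - int l)) :: rat)"
    unfolding Qj_def poly_prod by (intro prod.cong refl) (simp add: algebra_simps)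
  also have "\<dots> = of_int (\<Prod>m\<in>{0..<n}. int j + int p * (- int l + int m))"
    by (simp add: of_int_prod algebra_simps)
  also have "(\<Prod>m\<in>{0..<n}. int j + int p * (- int l + int m)) = (\<Prod>m\<in>{- int l..<- int l + int n}. int j + int p * m)"
    by (subst prod_int_ivl) (simp add: algebra_simps)
  finally show ?thesis .
qed

lemma cj_int:
  assumes p: "prime p" and l: "l \<le> n"
  shows "of_nat p ^ multiplicity p (fact n :: nat) * (poly (Qj p n k j) (of_int (int k - int l)) /
     (\<Prod>l'\<in>{0..n}-{l}. of_int (int k - int l) - of_int (int k - int l') :: rat)) \<in> \<int>"
proof -
  define A where "A = (\<Prod>m\<in>{- int l..<- int l + int n}. int j + int p * m)"
  define E where "E = multiplicity p (fact n :: nat)"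
  define e1 where "e1 = multiplicity p (fact l :: nat)"
  define e2 where "e2 = multiplicity p (fact (n - l) :: nat)"
  have ivl: "{- int l..<- int l + int n} = {- int l..<- int l + int l} \<union> {0..<0 + int (n - l)}"
    using l by auto
  define P1 where "P1 = (\<Prod>m\<in>{- int l..<- int l + int l}. int j + int p * m)"
  define P2 where "P2 = (\<Prod>m\<in>{0..<0 + int (n - l)}. int j + int p * m)"
  have AP: "A = P1 * P2"
    unfolding A_def ivl P1_def P2_def by (rule prod.union_disjoint) auto
  have h1: "fact l dvd int p ^ e1 * P1"
    unfolding e1_def P1_def by (rule ap_dvd[OF p])
  have h2: "fact (n - l) dvd int p ^ e2 * P2"
    unfolding e2_def P2_def by (rule ap_dvd[OF p])
  have "fact l * fact (n - l) dvd (int p ^ e1 * P1) * (int p ^ e2 * P2)"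
    by (rule mult_dvd_mono[OF h1 h2])
  moreover have "(int p ^ e1 * P1) * (int p ^ e2 * P2) = int p ^ (e1 + e2) * A"
    unfolding AP by (simp add: power_add ac_simps)
  ultimately have d1: "fact l * fact (n - l) dvd int p ^ (e1 + e2) * A" by simp
  have "e1 + e2 = multiplicity p (fact l * fact (n - l) :: nat)"
    unfolding e1_def e2_def using p by (simp add: prime_elem_multiplicity_mult_distrib)
  also have "\<dots> \<le> E" unfolding E_def
  proof (rule dvd_imp_multiplicity_le)
    show "(fact l * fact (n - l) :: nat) dvd fact n" using fact_fact_dvd_fact[of l "n - l"] l by simp
  qed simp
  finally have "int p ^ (e1 + e2) dvd int p ^ E" by (rule le_imp_power_dvd)
  with d1 have "fact l * fact (n - l) dvd int p ^ E * A" by (metis dvd_mult_left dvd_trans mult_dvd_mono dvd_refl)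
  then obtain q where q: "int p ^ E * A = fact l * fact (n - l) * q" by (rule dvdE)
  have "of_nat p ^ E * (poly (Qj p n k j) (of_int (int k - int l)) /
     (\<Prod>l'\<in>{0..n}-{l}. of_int (int k - int l) - of_int (int k - int l') :: rat))
     = of_int (int p ^ E * A) / of_int ((-1) ^ l * fact l * fact (n - l))"
    unfolding W_rat[OF l] poly_Qj_node A_def by simp
  also have "\<dots> = of_int ((-1) ^ l * q)" unfolding q by (simp add: field_simps)
  also have "\<dots> \<in> \<int>" by simp
  finally show ?thesis unfolding E_def .
qed



lemma L1: "poly (Pk n k) u = (\<Prod>l\<in>{0..n}-{k}. u + of_int (int l - int k))"
  by (simp add: Pk_def poly_prod algebra_simps)

lemma L2: assumes "k \<le> n"
  shows "pochhammer (u - of_nat k) (n + 1) = u * poly (Pk n k) (u :: rat)"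
proof -
  have "pochhammer (u - of_nat k) (n + 1) = (\<Prod>l\<in>{0..n}. u - of_nat k + of_nat l)"
    by (simp add: pochhammer_prod atLeastLessThanSuc_atLeastAtMost)
  also have "\<dots> = (u - of_nat k + of_nat k) * (\<Prod>l\<in>{0..n}-{k}. u - of_nat k + of_nat l)"
    using assms by (subst prod.remove[of _ k]) auto
  also have "\<dots> = u * poly (Pk n k) u" unfolding L1 by (simp add: algebra_simps)
  finally show ?thesis .
qed

lemma L3: assumes "p > 0"
  shows "poly (Qj p n k j) u = of_nat p ^ n * pochhammer (u - of_nat k + of_nat j / of_nat p) n"
proof -
  have "poly (Qj p n k j) u = (\<Prod>m\<in>{0..<n}. of_nat p * (u - of_nat k + of_nat j / of_nat p + of_nat m))"
    unfolding Qj_def poly_prod using assms by (intro prod.cong refl) (simp add: field_simps)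
  also have "\<dots> = of_nat p ^ n * pochhammer (u - of_nat k + of_nat j / of_nat p) n"
    by (simp add: prod.distrib pochhammer_prod)
  finally show ?thesis .
qed

definition NN :: "nat \<Rightarrow> nat \<Rightarrow> nat \<Rightarrow> nat \<Rightarrow> rat poly" where
  "NN p s n k = smult (of_nat p ^ n * fact n ^ s) ([:- of_nat k, 1:] ^ M0 p s * (\<Prod>j\<in>{1..p-1}. Qj p n k j))"

lemma L4: assumes "p > 0" "k \<le> n" and nz: "u * poly (Pk n k) u \<noteq> 0"
  shows "Rn p s n (u - of_nat k) = poly (NN p s n k) u / (u * poly (Pk n k) u) ^ (p - 1 + s)"
proof -
  have "poly (NN p s n k) u = of_nat p ^ n * fact n ^ s * (u - of_nat k) ^ M0 p s *
      (\<Prod>j\<in>{1..p-1}. of_nat p ^ n * pochhammer (u - of_nat k + of_nat j / of_nat p) n)"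
    unfolding NN_def using assms(1) by (simp add: poly_prod L3)
  also have "\<dots> = of_nat p ^ (n + n * (p - 1)) * fact n ^ s * (u - of_nat k) ^ M0 p s *
      (\<Prod>j\<in>{1..p-1}. pochhammer (u - of_nat k + of_nat j / of_nat p) n)"
    by (simp add: prod.distrib power_add power_mult)
  also have "n + n * (p - 1) = p * n" using assms(1) by (cases p) auto
  finally have e: "poly (NN p s n k) u = of_nat p ^ (p * n) * fact n ^ s * (u - of_nat k) ^ M0 p s *
      (\<Prod>j\<in>{1..p-1}. pochhammer (u - of_nat k + of_nat j / of_nat p) n)" .
  show ?thesis unfolding Rn_def e L2[OF assms(2)] by simp
qed



definition SS :: "(nat \<Rightarrow> nat \<Rightarrow> rat) \<Rightarrow> nat \<Rightarrow> nat \<Rightarrow> rat poly" where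
  "SS r P k = (\<Sum>i'\<in>{1..P}. monom (r i' k) (P - i'))"

definition TT :: "(nat \<Rightarrow> nat \<Rightarrow> rat) \<Rightarrow> nat \<Rightarrow> nat \<Rightarrow> nat \<Rightarrow> rat poly" where
  "TT r P n k = (\<Sum>k'\<in>{1..n}-{k}. \<Sum>i'\<in>{1..P}. smult (r i' k')
      ([:of_int (int k' - int k), 1:] ^ (P - i') * (\<Prod>l\<in>{0..n}-{k,k'}. [:of_int (int l - int k), 1:] ^ P)))"

lemma term_eq:
  fixes u :: rat
  assumes k: "k \<in> {1..n}" and k': "k' \<in> {1..n}" and i': "i' \<in> {1..P}"
    and u: "\<forall>l\<in>{0..n}. u \<noteq> of_int (int k - int l)"
  shows "(u * poly (Pk n k) u) ^ P * (c / (u - of_nat k + of_nat k') ^ i') =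
    (if k' = k then poly (Pk n k) u ^ P * (c * u ^ (P - i'))
     else u ^ P * (c * (u + of_int (int k' - int k)) ^ (P - i') * (\<Prod>l\<in>{0..n}-{k,k'}. (u + of_int (int l - int k)) ^ P)))"
proof (cases "k' = k")
  case True
  have u0: "u \<noteq> 0" using u k by force
  have "u ^ P = u ^ (P - i') * u ^ i'" using i' by (simp add: power_add[symmetric])
  then show ?thesis using True u0 by (simp add: power_mult_distrib field_simps)
next
  case False
  define a where "a = u + of_int (int k' - int k)"
  define R where "R = (\<Prod>l\<in>{0..n}-{k,k'}. u + of_int (int l - int k))"
  have a0: "a \<noteq> 0" unfolding a_def using u k' by (auto simp: algebra_simps)
  have ta: "u - of_nat k + of_nat k' = a" by (simp add: a_def)
  have "({0..n}-{k})-{k'} = {0..n}-{k,k'}" by auto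
  then have PR: "poly (Pk n k) u = a * R" unfolding L1 a_def R_def using k' False
    by (subst prod.remove[of _ k']) auto
  have aP: "a ^ P = a ^ (P - i') * a ^ i'" using i' by (simp add: power_add[symmetric])
  have "(u * poly (Pk n k) u) ^ P * (c / (u - of_nat k + of_nat k') ^ i') = u ^ P * (c * a ^ (P - i') * R ^ P)"
    unfolding PR ta using a0 by (simp add: power_mult_distrib aP field_simps)
  also have "R ^ P = (\<Prod>l\<in>{0..n}-{k,k'}. (u + of_int (int l - int k)) ^ P)"
    unfolding R_def by (rule prod_power_distrib)
  finally show ?thesis using False by (simp add: a_def)
qed

lemma L5:
  fixes u :: rat and r :: "nat \<Rightarrow> nat \<Rightarrow> rat"
  assumes p: "p > 0" and k: "k \<in> {1..n}"
    and decomp: "\<forall>t::rat. (\<forall>m\<in>{0..n}. t \<noteq> - of_nat m) \<longrightarrow>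
        Rn p s n t = (\<Sum>i' = 1..p - 1 + s. \<Sum>k' = 1..n. r i' k' / (t + of_nat k') ^ i')"
    and u: "\<forall>l\<in>{0..n}. u \<noteq> of_int (int k - int l)"
  shows "poly (NN p s n k) u = poly (Pk n k) u ^ (p - 1 + s) * poly (SS r (p - 1 + s) k) u
      + u ^ (p - 1 + s) * poly (TT r (p - 1 + s) n k) u"
proof -
  define P where "P = p - 1 + s"
  define t where "t = u - of_nat k"
  have ht: "\<forall>m\<in>{0..n}. t \<noteq> - of_nat m"
  proof
    fix m assume m: "m \<in> {0..n}"
    show "t \<noteq> - of_nat m" using u[rule_format, OF m] by (auto simp: t_def algebra_simps)
  qed
  have u0: "u \<noteq> 0" using u k by force
  have Pi0: "poly (Pk n k) u \<noteq> 0"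
    unfolding L1 using u by (auto simp: prod_zero_iff algebra_simps)
  have nz: "u * poly (Pk n k) u \<noteq> 0" using u0 Pi0 by simp
  have "poly (NN p s n k) u = (u * poly (Pk n k) u) ^ P * Rn p s n t"
    unfolding t_def P_def using L4[OF p _ nz, of s] k nz by simp
  also have "Rn p s n t = (\<Sum>i'\<in>{1..P}. \<Sum>k'\<in>{1..n}. r i' k' / (t + of_nat k') ^ i')"
    using decomp ht unfolding P_def by blast
  also have "(u * poly (Pk n k) u) ^ P * \<dots> = (\<Sum>i'\<in>{1..P}. \<Sum>k'\<in>{1..n}.
      (if k' = k then poly (Pk n k) u ^ P * (r i' k' * u ^ (P - i'))
       else u ^ P * (r i' k' * (u + of_int (int k' - int k)) ^ (P - i') * (\<Prod>l\<in>{0..n}-{k,k'}. (u + of_int (int l - int k)) ^ P))))"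
    unfolding sum_distrib_left t_def
    by (intro sum.cong refl term_eq[OF k _ _ u]) auto
  also have "\<dots> = (\<Sum>i'\<in>{1..P}. poly (Pk n k) u ^ P * (r i' k * u ^ (P - i')) +
      (\<Sum>k'\<in>{1..n}-{k}. u ^ P * (r i' k' * (u + of_int (int k' - int k)) ^ (P - i') * (\<Prod>l\<in>{0..n}-{k,k'}. (u + of_int (int l - int k)) ^ P))))"
  proof (intro sum.cong refl)
    fix i' assume "i' \<in> {1..P}"
    show "(\<Sum>k'\<in>{1..n}.
      (if k' = k then poly (Pk n k) u ^ P * (r i' k' * u ^ (P - i'))
       else u ^ P * (r i' k' * (u + of_int (int k' - int k)) ^ (P - i') * (\<Prod>l\<in>{0..n}-{k,k'}. (u + of_int (int l - int k)) ^ P))))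
      = poly (Pk n k) u ^ P * (r i' k * u ^ (P - i')) +
      (\<Sum>k'\<in>{1..n}-{k}. u ^ P * (r i' k' * (u + of_int (int k' - int k)) ^ (P - i') * (\<Prod>l\<in>{0..n}-{k,k'}. (u + of_int (int l - int k)) ^ P)))"
      using k by (subst sum.remove[of _ k]) (auto intro!: sum.cong)
  qed
  also have "\<dots> = poly (Pk n k) u ^ P * poly (SS r P k) u + u ^ P * poly (TT r P n k) u"
    unfolding SS_def TT_def poly_sum sum.distrib sum_distrib_left
    by (subst sum.swap[of _ "{1..P}"]) (simp add: poly_monom poly_prod algebra_simps)
  finally show ?thesis unfolding P_def .
qed



lemma poly_id:
  fixes r :: "nat \<Rightarrow> nat \<Rightarrow> rat"
  assumes p: "p > 0" and k: "k \<in> {1..n}"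
    and decomp: "\<forall>t::rat. (\<forall>m\<in>{0..n}. t \<noteq> - of_nat m) \<longrightarrow>
        Rn p s n t = (\<Sum>i' = 1..p - 1 + s. \<Sum>k' = 1..n. r i' k' / (t + of_nat k') ^ i')"
  shows "NN p s n k = Pk n k ^ (p - 1 + s) * SS r (p - 1 + s) k + [:0, 1:] ^ (p - 1 + s) * TT r (p - 1 + s) n k"
    (is "?L = ?R")
proof (rule ccontr)
  assume ne: "?L \<noteq> ?R"
  then have "?L - ?R \<noteq> 0" by simp
  then have fin: "finite {x. poly (?L - ?R) x = 0}" by (rule poly_roots_finite)
  have "UNIV \<subseteq> {x. poly (?L - ?R) x = 0} \<union> (\<lambda>l. of_int (int k - int l)) ` {0..n}"
  proof
    fix u :: rat assume "u \<in> UNIV"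
    show "u \<in> {x. poly (?L - ?R) x = 0} \<union> (\<lambda>l. of_int (int k - int l)) ` {0..n}"
    proof (cases "\<forall>l\<in>{0..n}. u \<noteq> of_int (int k - int l)")
      case True
      have "poly ?L u = poly ?R u" using L5[OF p k decomp True] by (simp add: poly_monom)
      then show ?thesis by simp
    next
      case False then show ?thesis by auto
    qed
  qed
  moreover have "finite ({x. poly (?L - ?R) x = 0} \<union> (\<lambda>l. of_int (int k - int l)) ` {0..n})"
    using fin by simp
  ultimately have "finite (UNIV :: rat set)" by (rule finite_subset)
  then show False using infinite_UNIV_char_0 by blast
qed

lemma coeff_SS:
  assumes "i \<in> {1..P}"
  shows "coeff (SS r P k) (P - i) = r i k"
proof -
  have "coeff (SS r P k) (P - i) = (\<Sum>i'\<in>{1..P}. if i' = i then r i' k else 0)"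
    unfolding SS_def coeff_sum coeff_monom using assms by (intro sum.cong refl) auto
  also have "\<dots> = r i k" using assms by simp
  finally show ?thesis .
qed

theorem lemma5p3:
  fixes p s n :: nat and r :: "nat \<Rightarrow> nat \<Rightarrow> rat" and i k :: nat
  assumes "prime p" and "p \<ge> 5" and "s > 0"
    and "n > (p + s) ^ 4"
    and decomp: "\<forall>t::rat. (\<forall>m\<in>{0..n}. t \<noteq> - of_nat m) \<longrightarrow>
        Rn p s n t = (\<Sum>i' = 1..p - 1 + s. \<Sum>k' = 1..n. r i' k' / (t + of_nat k') ^ i')"
    and "i \<in> {1..p - 1 + s}" and "k \<in> {1..n}"
  shows "(of_nat (dlcm n)) ^ (p - 1 + s - i) * r i k \<in> \<int>"
proof -
  define P where "P = p - 1 + s"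
  have pr: "prime p" by fact
  have p0: "p > 0" using assms(2) by simp
  have k: "k \<in> {1..n}" by fact
  have kn: "k \<le> n" using k by simp
  have i: "i \<in> {1..P}" using assms(6) by (simp add: P_def)
  define iv where "iv = inverse (fps_of_poly (Pk n k))"
  have Pk0: "fps_of_poly (Pk n k) $ 0 \<noteq> 0" unfolding Pk_def by (rule prod_lin_0_nz) auto
  have Piv: "fps_of_poly (Pk n k) * iv = 1" unfolding iv_def using Pk0 by (rule inverse_mult_eq_1')
  define Gf where "Gf = fps_of_poly (NN p s n k) * iv ^ P"
  have id: "NN p s n k = Pk n k ^ P * SS r P k + [:0, 1:] ^ P * TT r P n k"
    unfolding P_def by (rule poly_id[OF p0 k decomp])
  have "Gf = fps_of_poly (SS r P k) * (fps_of_poly (Pk n k) * iv) ^ P + fps_X ^ P * (fps_of_poly (TT r P n k) * iv ^ P)"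
    unfolding Gf_def id by (simp add: fps_of_poly_add fps_of_poly_mult fps_of_poly_power power_mult_distrib algebra_simps)
  then have Gf2: "Gf = fps_of_poly (SS r P k) + fps_X ^ P * (fps_of_poly (TT r P n k) * iv ^ P)"
    unfolding Piv by simp
  have coeffG: "Gf $ (P - i) = r i k"
    unfolding Gf2 using i by (simp add: fps_X_power_mult_nth coeff_SS)
  define E where "E = multiplicity p (fact n :: nat)"
  have EL: "(p - 1) * E \<le> n" unfolding E_def by (rule legendre_bound[OF pr])
  have cardj: "card {1..p-1} = p - 1" by simp
  have "Gf = fps_const (of_nat p ^ (n - (p - 1) * E)) * fps_of_poly ([:- of_nat k, 1:] ^ M0 p s) *
       (\<Prod>j\<in>{1..p-1}. fps_const (of_nat p ^ E) * (fps_of_poly (Qj p n k j) * iv)) *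
       (fps_const (fact n) * (fps_of_poly 1 * iv)) ^ s"
  proof -
    have "(\<Prod>j\<in>{1..p-1}. fps_const (of_nat p ^ E) * (fps_of_poly (Qj p n k j) * iv))
        = fps_const (of_nat p ^ E) ^ (p - 1) * (\<Prod>j\<in>{1..p-1}. fps_of_poly (Qj p n k j)) * iv ^ (p - 1)"
      by (simp add: prod.distrib)
    moreover have "(of_nat p :: rat) ^ (n - (p - 1) * E) * (of_nat p ^ E) ^ (p - 1) = of_nat p ^ n"
      using EL by (simp add: power_mult[symmetric] power_add[symmetric] mult.commute)
    ultimately show ?thesis
      unfolding Gf_def NN_def P_def
      by (simp add: fps_of_poly_smult fps_of_poly_mult fps_of_poly_prod power_mult_distrib power_add ac_simps)
  qed
  moreover have "good n \<dots>"
  proof -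
    have g1: "good n (fps_const (of_nat p ^ (n - (p - 1) * E)))" by (rule good_const) simp
    have g2: "good n (fps_of_poly ([:- of_nat k, 1:] ^ M0 p s))"
      unfolding fps_of_poly_power
      by (rule good_power, rule good_intcoeff) (simp add: coeff_pCons split: nat.split)
    have g3: "good n (fps_const (of_nat p ^ E) * (fps_of_poly (Qj p n k j) * iv))" if "j \<in> {1..p-1}" for j
      unfolding iv_def E_def
    proof (rule good_decomp[OF degree_Qj kn])
      fix l assume "l \<le> n"
      then show "of_nat p ^ multiplicity p (fact n :: nat) * (poly (Qj p n k j) (of_int (int k - int l)) /
         (\<Prod>l'\<in>{0..n}-{l}. of_int (int k - int l) - of_int (int k - int l') :: rat)) \<in> \<int>"
        by (rule cj_int[OF pr])
    qed
    have g4: "good n (fps_const (fact n) * (fps_of_poly 1 * iv))"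
      unfolding iv_def
    proof (rule good_decomp[OF _ kn])
      fix l assume "l \<le> n"
      then show "fact n * (poly 1 (of_int (int k - int l)) /
         (\<Prod>l'\<in>{0..n}-{l}. of_int (int k - int l) - of_int (int k - int l') :: rat)) \<in> \<int>"
        by (rule c0_int)
    qed simp
    show ?thesis
      by (rule good_mult[OF good_mult[OF good_mult[OF g1 g2] good_prod[OF g3]] good_power[OF g4]])
  qed
  ultimately have "good n Gf" by simp
  then have "of_nat (dlcm n) ^ (P - i) * Gf $ (P - i) \<in> \<int>" unfolding good_def by blast
  then show ?thesis unfolding coeffG by (simp add: P_def)
qed


end
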